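(* Let $d\geq 3$ and $k\geq 1$, and let $P_{d,k}(t)=\sum_{n\geq 1}p_{d,k,n}t^n$, where $p_{d,k,n}$ is the number of directed plateau polyhypercubes of dimension $d$, width $k$ and lateral area $n$. Then $$P_{d,k}(t)=\frac{t^{k(d-1)}}{(1-t)^{2k(d-1)-(d-1)}}.$$
   Context: Work in $\mathbb{Z}^d$ with orthonormal coordinate system $(0,\vec{i_1},\dots,\vec{i_d})$; a cell is a unit hypercube of the lattice. A polyhypercube of dimension $d$ is a finite union of cells, connected through their $(d-1)$-dimensional faces, defined up to translation. Its width is the number of distinct values of the $\vec{i_1}$-coordinate taken by its cells; its strata are its intersections with the layers of constant $\vec{i_1}$-coordinate. A plateau is a stratum that is a hyperrectangle. An elementary step is a positive move of one unit along one axis. A polyhypercube is directed if every cell can be reached from a distinguished root cell by a path of cells of the polyhypercube using only elementary steps. A directed plateau polyhypercube is a directed polyhypercube all of whose strata are plateaus. The lateral area of a polyhypercube is the sum, over $2\leq l\leq d$, of the areas (numbers of unit squares) of the polyominoes obtained by projecting it onto the planes $(\vec{i_1},\vec{i_l})$. Generating functions are formal power series in $t$. *)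

theory Defs
  imports Main "HOL-Computational_Algebra.Formal_Power_Series"
begin

text \<open>Cells of the d-dimensional lattice: a cell is identified with its minimal
corner, a point of Z^d, represented as a function nat => int vanishing at
indices >= d. Coordinate 0 is the i_1 axis; coordinates 1..d-1 are i_2..i_d.\<close>

definition cells :: "nat \<Rightarrow> (nat \<Rightarrow> int) set" where
  "cells d = {x. \<forall>i\<ge>d. x i = 0}"

definition unitv :: "nat \<Rightarrow> nat \<Rightarrow> int" where
  "unitv j = (\<lambda>i. if i = j then 1 else 0)"

definition adjacent :: "nat \<Rightarrow> (nat \<Rightarrow> int) \<Rightarrow> (nat \<Rightarrow> int) \<Rightarrow> bool" where
  "adjacent d x y \<longleftrightarrow> (\<exists>j<d. y = (\<lambda>i. x i + unitv j i) \<or> x = (\<lambda>i. y i + unitv j i))"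

definition elem_step :: "nat \<Rightarrow> (nat \<Rightarrow> int) \<Rightarrow> (nat \<Rightarrow> int) \<Rightarrow> bool" where
  "elem_step d x y \<longleftrightarrow> (\<exists>j<d. y = (\<lambda>i. x i + unitv j i))"

definition polyhypercube :: "nat \<Rightarrow> (nat \<Rightarrow> int) set \<Rightarrow> bool" where
  "polyhypercube d A \<longleftrightarrow> finite A \<and> A \<noteq> {} \<and> A \<subseteq> cells d \<and>
     (\<forall>x\<in>A. \<forall>y\<in>A. (\<lambda>u v. u \<in> A \<and> v \<in> A \<and> adjacent d u v)\<^sup>*\<^sup>* x y)"

definition directed :: "nat \<Rightarrow> (nat \<Rightarrow> int) set \<Rightarrow> bool" where
  "directed d A \<longleftrightarrow> (\<exists>r\<in>A. \<forall>c\<in>A. (\<lambda>u v. u \<in> A \<and> v \<in> A \<and> elem_step d u v)\<^sup>*\<^sup>* r c)"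

definition width :: "(nat \<Rightarrow> int) set \<Rightarrow> nat" where
  "width A = card ((\<lambda>x. x 0) ` A)"

definition stratum :: "(nat \<Rightarrow> int) set \<Rightarrow> int \<Rightarrow> (nat \<Rightarrow> int) set" where
  "stratum A a = {x\<in>A. x 0 = a}"

definition plateau :: "nat \<Rightarrow> int \<Rightarrow> (nat \<Rightarrow> int) set \<Rightarrow> bool" where
  "plateau d a S \<longleftrightarrow> (\<exists>lo hi :: nat \<Rightarrow> int.
      S = {x\<in>cells d. x 0 = a \<and> (\<forall>i\<in>{1..<d}. lo i \<le> x i \<and> x i \<le> hi i)})"

definition directed_plateau :: "nat \<Rightarrow> (nat \<Rightarrow> int) set \<Rightarrow> bool" where
  "directed_plateau d A \<longleftrightarrow> polyhypercube d A \<and> directed d A \<and>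
     (\<forall>a\<in>(\<lambda>x. x 0) ` A. plateau d a (stratum A a))"

text \<open>Lateral area: sum over l = 2..d (indices 1..d-1 here) of the area of the
projection onto the plane (i_1, i_l).\<close>
definition lateral_area :: "nat \<Rightarrow> (nat \<Rightarrow> int) set \<Rightarrow> nat" where
  "lateral_area d A = (\<Sum>l\<in>{1..<d}. card ((\<lambda>x. (x 0, x l)) ` A))"

definition transl_rel :: "nat \<Rightarrow> ((nat \<Rightarrow> int) set \<times> (nat \<Rightarrow> int) set) set" where
  "transl_rel d = {(A, B). \<exists>v\<in>cells d. B = (\<lambda>x i. x i + v i) ` A}"

definition p_count :: "nat \<Rightarrow> nat \<Rightarrow> nat \<Rightarrow> nat" where
  "p_count d k n = card ({A. directed_plateau d A \<and> width A = k \<and> lateral_area d A = n}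
                          // transl_rel d)"

definition P_gf :: "nat \<Rightarrow> nat \<Rightarrow> rat fps" where
  "P_gf d k = Abs_fps (\<lambda>n. if n = 0 then 0 else of_nat (p_count d k n))"

end

theory Submission
  imports Defs "HOL-Library.Multiset"
begin

unbundle fps_syntax

definition tr :: "(nat \<Rightarrow> int) \<Rightarrow> (nat \<Rightarrow> int) \<Rightarrow> (nat \<Rightarrow> int)" where
  "tr v x = (\<lambda>i. x i + v i)"

lemma tr_apply[simp]: "tr v x i = x i + v i"
  by (simp add: tr_def)

lemma tr_tr[simp]: "tr v (tr w x) = tr (tr v w) x"
  by (auto simp: tr_def fun_eq_iff)

lemma tr_inj: "inj (tr v)"
  by (auto simp: inj_def tr_def fun_eq_iff)

lemma tr_neg[simp]: "tr (\<lambda>i. - v i) (tr v x) = x" "tr v (tr (\<lambda>i. - v i) x) = x"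
  by (auto simp: tr_def fun_eq_iff)

lemma tr_neg_self[simp]: "tr (\<lambda>i. - v i) v = (\<lambda>_. 0)" "tr v (\<lambda>i. - v i) = (\<lambda>_. 0)"
  by (auto simp: tr_def fun_eq_iff)

lemma tr_zero[simp]: "tr (\<lambda>i. 0) x = x"
  by (auto simp: tr_def fun_eq_iff)

lemma cells_tr: "v \<in> cells d \<Longrightarrow> x \<in> cells d \<Longrightarrow> tr v x \<in> cells d"
  by (simp add: cells_def)

lemma cells_neg: "v \<in> cells d \<Longrightarrow> (\<lambda>i. - v i) \<in> cells d"
  by (simp add: cells_def)

lemma adjacent_tr: "adjacent d x y \<Longrightarrow> adjacent d (tr v x) (tr v y)"
  unfolding adjacent_def tr_def by (auto simp: fun_eq_iff algebra_simps)

lemma elem_step_tr: "elem_step d x y \<Longrightarrow> elem_step d (tr v x) (tr v y)"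
  unfolding elem_step_def tr_def by (auto simp: fun_eq_iff algebra_simps)

lemma rtranclp_tr:
  assumes "(\<lambda>u w. u \<in> A \<and> w \<in> A \<and> P u w)\<^sup>*\<^sup>* x y"
    and "\<And>u w. P u w \<Longrightarrow> P (tr v u) (tr v w)"
  shows "(\<lambda>u w. u \<in> tr v ` A \<and> w \<in> tr v ` A \<and> P u w)\<^sup>*\<^sup>* (tr v x) (tr v y)"
  using assms(1)
proof (induction rule: rtranclp_induct)
  case base
  then show ?case by simp
next
  case (step y z)
  then show ?case using assms(2)
    by (metis (mono_tags, lifting) image_eqI rtranclp.rtrancl_into_rtrancl)
qed

lemma rtranclp_tr_inv:
  assumes "(\<lambda>u w. u \<in> A \<and> w \<in> A \<and> P u w)\<^sup>*\<^sup>* x y"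
  shows "y \<in> A \<or> x = y"
  using assms by (induction rule: rtranclp_induct) auto

definition box :: "nat \<Rightarrow> int \<Rightarrow> (nat \<Rightarrow> int) \<Rightarrow> (nat \<Rightarrow> int) \<Rightarrow> (nat \<Rightarrow> int) set" where
  "box d a lo hi = {x\<in>cells d. x 0 = a \<and> (\<forall>i\<in>{1..<d}. lo i \<le> x i \<and> x i \<le> hi i)}"

lemma plateau_box: "plateau d a S \<longleftrightarrow> (\<exists>lo hi. S = box d a lo hi)"
  by (simp add: plateau_def box_def)

lemma box_tr:
  assumes "v \<in> cells d"
  shows "tr v ` box d a lo hi = box d (a + v 0) (tr v lo) (tr v hi)"
proof
  show "tr v ` box d a lo hi \<subseteq> box d (a + v 0) (tr v lo) (tr v hi)"
    using assms by (auto simp: box_def cells_tr)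
  show "box d (a + v 0) (tr v lo) (tr v hi) \<subseteq> tr v ` box d a lo hi"
  proof
    fix x assume x: "x \<in> box d (a + v 0) (tr v lo) (tr v hi)"
    have "tr (\<lambda>i. - v i) x \<in> box d a lo hi"
      using x assms by (auto simp: box_def cells_def)
    then show "x \<in> tr v ` box d a lo hi"
      by (metis image_eqI tr_neg(2))
  qed
qed

lemma stratum_tr: "stratum (tr v ` A) (a + v 0) = tr v ` stratum A a"
  by (auto simp: stratum_def)

lemma width_tr: "width (tr v ` A) = width A"
proof -
  have "(\<lambda>x. x 0) ` tr v ` A = (\<lambda>a. a + v 0) ` ((\<lambda>x. x 0) ` A)"
    by (auto simp: image_image)
  moreover have "inj (\<lambda>a::int. a + v 0)" by (auto simp: inj_def)
  ultimately show ?thesis unfolding width_def by (simp add: card_image inj_on_subset)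
qed

lemma lateral_tr: "lateral_area d (tr v ` A) = lateral_area d A"
proof -
  have "card ((\<lambda>x. (x 0, x l)) ` tr v ` A) = card ((\<lambda>x. (x 0, x l)) ` A)" for l
  proof -
    have "(\<lambda>x. (x 0, x l)) ` tr v ` A = (\<lambda>(a, b). (a + v 0, b + v l)) ` ((\<lambda>x. (x 0, x l)) ` A)"
      by (auto simp: image_image)
    moreover have "inj (\<lambda>(a::int, b::int). (a + v 0, b + v l))" by (auto simp: inj_def)
    ultimately show ?thesis by (simp add: card_image inj_on_subset)
  qed
  then show ?thesis unfolding lateral_area_def by simp
qed

lemma directed_conn:
  assumes "directed d A"
  shows "\<forall>x\<in>A. \<forall>y\<in>A. (\<lambda>u v. u \<in> A \<and> v \<in> A \<and> adjacent d u v)\<^sup>*\<^sup>* x y"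
proof -
  let ?R = "\<lambda>u v. u \<in> A \<and> v \<in> A \<and> adjacent d u v"
  obtain r where r: "r \<in> A" "\<forall>c\<in>A. (\<lambda>u v. u \<in> A \<and> v \<in> A \<and> elem_step d u v)\<^sup>*\<^sup>* r c"
    using assms unfolding directed_def by blast
  have step_adj: "elem_step d u v \<Longrightarrow> adjacent d u v" for u v
    unfolding elem_step_def adjacent_def by blast
  have sym: "?R u v \<Longrightarrow> ?R v u" for u v
    unfolding adjacent_def by blast
  have a: "?R\<^sup>*\<^sup>* r c" if "c \<in> A" for c
  proof -
    have "(\<lambda>u v. u \<in> A \<and> v \<in> A \<and> elem_step d u v)\<^sup>*\<^sup>* r c" using r(2) that by blast
    then show ?thesis
    proof (induction rule: rtranclp_induct)
      case base then show ?case by simp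
    next
      case (step y z)
      then have "?R y z" using step_adj by blast
      then show ?case using step.IH by (rule rtranclp.rtrancl_into_rtrancl[rotated])
    qed
  qed
  have b: "?R\<^sup>*\<^sup>* c r" if "c \<in> A" for c
  proof -
    have "?R\<^sup>*\<^sup>* r c" using a that .
    then show ?thesis
    proof (induction rule: rtranclp_induct)
      case base then show ?case by simp
    next
      case (step y z)
      have "?R z y" using step.hyps(2) sym by blast
      then show ?case using step.IH by (rule converse_rtranclp_into_rtranclp)
    qed
  qed
  show ?thesis using a b by (meson rtranclp_trans)
qed

lemma directed_tr:
  assumes "directed d A" shows "directed d (tr v ` A)"
proof -
  obtain r where r: "r \<in> A" "\<forall>c\<in>A. (\<lambda>u v. u \<in> A \<and> v \<in> A \<and> elem_step d u v)\<^sup>*\<^sup>* r c"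
    using assms unfolding directed_def by blast
  show ?thesis unfolding directed_def
    using r rtranclp_tr[where P="elem_step d" and A=A and v=v] elem_step_tr by blast
qed

lemma directed_plateau_tr:
  assumes "directed_plateau d A" "v \<in> cells d"
  shows "directed_plateau d (tr v ` A)"
proof -
  have pA: "polyhypercube d A" "directed d A" "\<forall>a\<in>(\<lambda>x. x 0) ` A. plateau d a (stratum A a)"
    using assms(1) unfolding directed_plateau_def by auto
  have dir: "directed d (tr v ` A)" using directed_tr pA(2) .
  have poly: "polyhypercube d (tr v ` A)"
    using pA(1) directed_conn[OF dir] assms(2) unfolding polyhypercube_def
    by (auto simp: cells_tr)
  have pl: "plateau d b (stratum (tr v ` A) b)" if hb: "b \<in> (\<lambda>x. x 0) ` tr v ` A" for b
  proof -
    obtain x where x: "x \<in> A" "b = tr v x 0" using hb by blast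
    then have x: "x \<in> A" "b = x 0 + v 0" by auto
    obtain lo hi where "stratum A (x 0) = box d (x 0) lo hi"
      using pA(3) x(1) by (auto simp: plateau_box)
    then have "stratum (tr v ` A) b = box d b (tr v lo) (tr v hi)"
      using stratum_tr[of v A "x 0"] box_tr[OF assms(2)] x(2) by simp
    then show ?thesis by (auto simp: plateau_box)
  qed
  show ?thesis unfolding directed_plateau_def using poly dir pl by blast
qed


lemma elem_step_mono: "elem_step d y z \<Longrightarrow> y i \<le> z i"
  unfolding elem_step_def unitv_def by auto

lemma directed_root:
  assumes "directed d A"
  shows "\<exists>r\<in>A. (\<forall>c\<in>A. (\<lambda>u v. u \<in> A \<and> v \<in> A \<and> elem_step d u v)\<^sup>*\<^sup>* r c) \<and> (\<forall>c\<in>A. \<forall>i. r i \<le> c i)"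
proof -
  obtain r where r: "r \<in> A" "\<forall>c\<in>A. (\<lambda>u v. u \<in> A \<and> v \<in> A \<and> elem_step d u v)\<^sup>*\<^sup>* r c"
    using assms unfolding directed_def by blast
  have "r i \<le> c i" if "c \<in> A" for c i
  proof -
    have "(\<lambda>u v. u \<in> A \<and> v \<in> A \<and> elem_step d u v)\<^sup>*\<^sup>* r c" using r that by blast
    then show ?thesis
    proof (induction rule: rtranclp_induct)
      case base then show ?case by simp
    next
      case (step y z) then show ?case using elem_step_mono[of d y z i] by simp
    qed
  qed
  then show ?thesis using r by blast
qed

definition canon :: "(nat \<Rightarrow> int) set \<Rightarrow> bool" where
  "canon A \<longleftrightarrow> (\<lambda>_. 0) \<in> A \<and> (\<forall>x\<in>A. \<forall>i. 0 \<le> x i)"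

lemma transl_rel_tr: "transl_rel d = {(A, B). \<exists>v\<in>cells d. B = tr v ` A}"
proof -
  show ?thesis unfolding transl_rel_def by (simp add: tr_def[abs_def])
qed

lemma tr_image_comp: "tr w ` tr v ` A = tr (tr w v) ` A"
  by (simp add: image_image)

lemma zero_cells: "(\<lambda>i. 0) \<in> cells d"
  by (simp add: cells_def)

lemma equiv_transl: "equiv UNIV (transl_rel d)"
proof (rule equivI)
  show "refl (transl_rel d)"
  proof (rule refl_onI)
    fix A :: "(nat \<Rightarrow> int) set"
    have "A = tr (\<lambda>i. 0) ` A" by simp
    then show "(A, A) \<in> transl_rel d" unfolding transl_rel_tr using zero_cells by blast
  qed
  show "sym (transl_rel d)"
  proof (rule symI)
    fix A B assume "(A, B) \<in> transl_rel d"
    then obtain v where v: "v \<in> cells d" "B = tr v ` A" unfolding transl_rel_tr by blast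
    then have "A = tr (\<lambda>i. - v i) ` B" by (simp add: image_image)
    then show "(B, A) \<in> transl_rel d" unfolding transl_rel_tr using cells_neg[OF v(1)] by blast
  qed
  show "trans (transl_rel d)"
  proof (rule transI)
    fix A B C assume "(A, B) \<in> transl_rel d" "(B, C) \<in> transl_rel d"
    then obtain v w where "v \<in> cells d" "B = tr v ` A" "w \<in> cells d" "C = tr w ` B"
      unfolding transl_rel_tr by blast
    then show "(A, C) \<in> transl_rel d" unfolding transl_rel_tr
      using cells_tr tr_image_comp by blast
  qed
qed auto

lemma canon_unique:
  assumes "canon A" "canon (tr v ` A)"
  shows "tr v ` A = A"
proof -
  have "tr v (\<lambda>_. 0) \<in> tr v ` A" using assms(1) unfolding canon_def by blast
  then have "0 \<le> tr v (\<lambda>_. 0) i" for i using assms(2) unfolding canon_def by blast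
  then have v: "0 \<le> v i" for i by simp
  obtain a where a: "a \<in> A" "tr v a = (\<lambda>_. 0)" using assms(2) unfolding canon_def by auto
  have "0 \<le> a i" for i using a(1) assms(1) unfolding canon_def by blast
  moreover have "a i + v i = 0" for i using a(2) by (metis tr_apply)
  ultimately have "v i = 0" for i using v[of i] by (metis add_nonneg_eq_0_iff)
  then have "v = (\<lambda>_. 0)" by auto
  then show ?thesis by simp
qed

lemma quotient_card:
  assumes inv: "\<And>A v. A \<in> S \<Longrightarrow> v \<in> cells d \<Longrightarrow> tr v ` A \<in> S"
    and dirS: "\<And>A. A \<in> S \<Longrightarrow> directed d A \<and> A \<subseteq> cells d"
  shows "card (S // transl_rel d) = card {A\<in>S. canon A}"
proof -
  let ?r = "transl_rel d"
  have eq: "equiv UNIV ?r" by (rule equiv_transl)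
  have "bij_betw (\<lambda>A. ?r``{A}) {A\<in>S. canon A} (S // ?r)"
    unfolding bij_betw_def
  proof
    show "inj_on (\<lambda>A. ?r``{A}) {A\<in>S. canon A}"
    proof (rule inj_onI)
      fix A B assume A: "A \<in> {A\<in>S. canon A}" and B: "B \<in> {A\<in>S. canon A}"
        and e: "?r``{A} = ?r``{B}"
      then have "(A, B) \<in> ?r" using eq_equiv_class[OF e eq] by blast
      then obtain v where "B = tr v ` A" unfolding transl_rel_tr by blast
      then show "A = B" using canon_unique[of A v] A B by simp
    qed
    show "(\<lambda>A. ?r``{A}) ` {A\<in>S. canon A} = S // ?r"
    proof
      show "(\<lambda>A. ?r``{A}) ` {A\<in>S. canon A} \<subseteq> S // ?r"
        unfolding quotient_def by blast
      show "S // ?r \<subseteq> (\<lambda>A. ?r``{A}) ` {A\<in>S. canon A}"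
      proof
        fix X assume "X \<in> S // ?r"
        then obtain A where A: "A \<in> S" "X = ?r``{A}" unfolding quotient_def by blast
        obtain r where r: "r \<in> A" "\<forall>c\<in>A. \<forall>i. r i \<le> c i"
          using directed_root dirS[OF A(1)] by blast
        have rc: "r \<in> cells d" using r(1) dirS[OF A(1)] by blast
        define B where "B = tr (\<lambda>i. - r i) ` A"
        have BS: "B \<in> S" unfolding B_def using inv[OF A(1) cells_neg[OF rc]] .
        have "tr (\<lambda>i. - r i) r = (\<lambda>_. 0)" by (simp add: tr_def)
        moreover have "\<forall>x\<in>B. \<forall>i. 0 \<le> x i" unfolding B_def using r(2) by simp
        ultimately have "canon B" unfolding canon_def B_def using r(1) by (metis image_eqI)
        moreover have "(A, B) \<in> ?r" unfolding transl_rel_tr B_def using cells_neg[OF rc] by blast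
        then have "X = ?r``{B}" using A(2) equiv_class_eq[OF eq, of A B] by simp
        ultimately show "X \<in> (\<lambda>A. ?r``{A}) ` {A\<in>S. canon A}" using BS by blast
      qed
    qed
  qed
  then show ?thesis by (rule bij_betw_same_card[symmetric])
qed


definition Iset :: "nat \<Rightarrow> nat \<Rightarrow> (nat \<times> nat \<times> bool) set" where
  "Iset d k = ({0..<k} \<times> {1..<d} \<times> UNIV) - ({k-1} \<times> {1..<d} \<times> {True})"

definition loM :: "(nat \<times> nat \<times> bool) multiset \<Rightarrow> nat \<Rightarrow> nat \<Rightarrow> int" where
  "loM M j l = int (\<Sum>i<j. count M (i, l, True))"

definition hiM :: "(nat \<times> nat \<times> bool) multiset \<Rightarrow> nat \<Rightarrow> nat \<Rightarrow> int" where
  "hiM M j l = loM M j l + int (count M (j, l, True)) + int (count M (j, l, False))"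

definition Amap :: "nat \<Rightarrow> nat \<Rightarrow> (nat \<times> nat \<times> bool) multiset \<Rightarrow> (nat \<Rightarrow> int) set" where
  "Amap d k M = {x\<in>cells d. 0 \<le> x 0 \<and> x 0 < int k \<and>
     (\<forall>l\<in>{1..<d}. loM M (nat (x 0)) l \<le> x l \<and> x l \<le> hiM M (nat (x 0)) l)}"

definition pt :: "nat \<Rightarrow> nat \<Rightarrow> (nat \<Rightarrow> int) \<Rightarrow> (nat \<Rightarrow> int)" where
  "pt d j f = (\<lambda>i. if i = 0 then int j else if i < d then f i else 0)"

lemma loM_nonneg: "0 \<le> loM M j l" by (simp add: loM_def sum_nonneg)
lemma loM_0[simp]: "loM M 0 l = 0" by (simp add: loM_def)
lemma lo_le_hi: "loM M j l \<le> hiM M j l" by (simp add: hiM_def)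
lemma loM_Suc: "loM M (Suc j) l = loM M j l + int (count M (j, l, True))"
  by (simp add: loM_def)

lemma pt_cells: "1 \<le> d \<Longrightarrow> pt d j f \<in> cells d"
  by (simp add: pt_def cells_def)

lemma pt_in:
  assumes "1 \<le> d"
  shows "pt d j f \<in> Amap d k M \<longleftrightarrow> j < k \<and> (\<forall>l\<in>{1..<d}. loM M j l \<le> f l \<and> f l \<le> hiM M j l)"
  using pt_cells[OF assms] by (auto simp: Amap_def pt_def)

lemma finite_cells_bounded: "finite {x\<in>cells d. \<forall>i<d. 0 \<le> x i \<and> x i \<le> B}"
proof -
  have "{x\<in>cells d. \<forall>i<d. 0 \<le> x i \<and> x i \<le> B} \<subseteq>
        (\<lambda>g i. if i < d then g i else 0) ` (PiE {..<d} (\<lambda>_. {0..B}))"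
  proof
    fix x assume x: "x \<in> {x\<in>cells d. \<forall>i<d. 0 \<le> x i \<and> x i \<le> B}"
    have "x = (\<lambda>i. if i < d then restrict x {..<d} i else 0)"
      using x by (auto simp: cells_def fun_eq_iff)
    moreover have "restrict x {..<d} \<in> PiE {..<d} (\<lambda>_. {0..B})" using x by auto
    ultimately show "x \<in> (\<lambda>g i. if i < d then g i else 0) ` (PiE {..<d} (\<lambda>_. {0..B}))"
      by blast
  qed
  moreover have "finite (PiE {..<d} (\<lambda>_. {0..B::int}))" by (simp add: finite_PiE)
  ultimately show ?thesis by (meson finite_imageI finite_subset)
qed

lemma Amap_finite: "finite (Amap d k M)"
proof -
  define B where "B = int k + (\<Sum>j<k. \<Sum>l<d. hiM M j l)"
  have hnn: "0 \<le> hiM M j l" for j l using loM_nonneg lo_le_hi order_trans by blast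
  have "Amap d k M \<subseteq> {x\<in>cells d. \<forall>i<d. 0 \<le> x i \<and> x i \<le> B}"
  proof
    fix x assume x: "x \<in> Amap d k M"
    have "0 \<le> x i \<and> x i \<le> B" if "i < d" for i
    proof (cases "i = 0")
      case True
      have "0 \<le> (\<Sum>j<k. \<Sum>l<d. hiM M j l)" using hnn by (simp add: sum_nonneg)
      then show ?thesis using x True by (auto simp: Amap_def B_def)
    next
      case False
      let ?j = "nat (x 0)"
      have j: "?j < k" using x by (auto simp: Amap_def)
      have xi: "loM M ?j i \<le> x i \<and> x i \<le> hiM M ?j i" using x False that by (auto simp: Amap_def)
      have "hiM M ?j i \<le> (\<Sum>l<d. hiM M ?j l)"
        using that hnn by (intro member_le_sum) auto
      also have "\<dots> \<le> (\<Sum>j<k. \<Sum>l<d. hiM M j l)"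
        using j hnn by (intro member_le_sum) (auto intro: sum_nonneg)
      finally show ?thesis using xi loM_nonneg[of M ?j i] by (simp add: B_def)
    qed
    then show "x \<in> {x\<in>cells d. \<forall>i<d. 0 \<le> x i \<and> x i \<le> B}" using x by (auto simp: Amap_def)
  qed
  then show ?thesis using finite_cells_bounded finite_subset by blast
qed

lemma zero_pt: "pt d 0 (\<lambda>_. 0) = (\<lambda>_. 0)"
  by (simp add: pt_def fun_eq_iff)

lemma Amap_canon:
  assumes "1 \<le> d" "1 \<le> k"
  shows "canon (Amap d k M)"
proof -
  have "pt d 0 (\<lambda>_. 0) \<in> Amap d k M"
    using assms lo_le_hi[of M 0] loM_nonneg by (subst pt_in) auto
  moreover have "0 \<le> x i" if "x \<in> Amap d k M" for x i
  proof -
    have "x \<in> cells d" "0 \<le> x 0" using that by (auto simp: Amap_def)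
    moreover have "0 \<le> x i" if "i \<in> {1..<d}"
      using \<open>x \<in> Amap d k M\<close> that loM_nonneg[of M "nat (x 0)" i] by (force simp: Amap_def)
    ultimately show ?thesis by (cases "i = 0"; cases "i < d") (auto simp: cells_def)
  qed
  ultimately show ?thesis unfolding canon_def zero_pt by auto
qed


lemma unitv_step: "elem_step d x (\<lambda>i. x i + unitv j i)" if "j < d"
  unfolding elem_step_def using that by blast

lemma box_reach:
  assumes "1 \<le> d"
  shows "\<And>p. p \<in> Amap d k M \<Longrightarrow> x \<in> Amap d k M \<Longrightarrow> p 0 = x 0 \<Longrightarrow> (\<forall>i. p i \<le> x i) \<Longrightarrow>
     n = (\<Sum>i<d. nat (x i - p i)) \<Longrightarrow>
     (\<lambda>u v. u \<in> Amap d k M \<and> v \<in> Amap d k M \<and> elem_step d u v)\<^sup>*\<^sup>* p x"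
proof (induction n)
  case 0
  have "p i = x i" if "i < d" for i
  proof -
    have "x i \<le> p i" using 0 that by auto
    then show ?thesis using 0 by (meson order_antisym)
  qed
  moreover have "p i = x i" if "\<not> i < d" for i using that 0 by (auto simp: Amap_def cells_def)
  ultimately have "p = x" by (metis ext)
  then show ?case by simp
next
  case (Suc n p)
  have "\<exists>i<d. p i < x i"
  proof (rule ccontr)
    assume "\<not> ?thesis"
    then have "\<forall>i<d. nat (x i - p i) = 0" using Suc.prems(4) by (auto simp: le_antisym)
    then show False using Suc.prems(5) by simp
  qed
  then obtain j where j: "j < d" "p j < x j" by blast
  have j0: "j \<noteq> 0" using j Suc.prems(3) by (metis less_irrefl)
  define p' where "p' = (\<lambda>i. p i + unitv j i)"
  have p'A: "p' \<in> Amap d k M"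
  proof -
    have "p' \<in> cells d" using Suc.prems(1) j by (auto simp: p'_def Amap_def cells_def unitv_def)
    moreover have "p' 0 = p 0" using j0 by (simp add: p'_def unitv_def)
    moreover have "loM M (nat (p 0)) l \<le> p' l \<and> p' l \<le> hiM M (nat (p 0)) l" if "l \<in> {1..<d}" for l
    proof (cases "l = j")
      case True
      then show ?thesis using Suc.prems(1,2,3) that j by (force simp: p'_def unitv_def Amap_def)
    next
      case False
      then show ?thesis using Suc.prems(1) that by (force simp: p'_def unitv_def Amap_def)
    qed
    ultimately show ?thesis using Suc.prems(1) by (auto simp: Amap_def)
  qed
  have le: "\<forall>i. p' i \<le> x i" using Suc.prems(4) j by (auto simp: p'_def unitv_def)
  have "(\<Sum>i<d. nat (x i - p i)) = (\<Sum>i<d. nat (x i - p' i)) + 1"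
  proof -
    have "(\<Sum>i<d. nat (x i - p i)) = (\<Sum>i<d. nat (x i - p' i) + (if i = j then 1 else 0))"
      using Suc.prems(4) j by (intro sum.cong) (auto simp: p'_def unitv_def)
    also have "\<dots> = (\<Sum>i<d. nat (x i - p' i)) + 1" using j by (simp add: sum.distrib)
    finally show ?thesis .
  qed
  then have "n = (\<Sum>i<d. nat (x i - p' i))" using Suc.prems(5) by simp
  then have "(\<lambda>u v. u \<in> Amap d k M \<and> v \<in> Amap d k M \<and> elem_step d u v)\<^sup>*\<^sup>* p' x"
    using Suc.IH[OF p'A Suc.prems(2)] Suc.prems(3) le j0 by (simp add: p'_def unitv_def)
  moreover have "elem_step d p p'" unfolding p'_def using unitv_step j(1) by blast
  ultimately show ?case using Suc.prems(1) p'A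
    by (metis (mono_tags, lifting) converse_rtranclp_into_rtranclp)
qed

lemma Amap_directed:
  assumes "1 \<le> d" "1 \<le> k"
  shows "directed d (Amap d k M)"
proof -
  let ?A = "Amap d k M"
  let ?R = "\<lambda>u v. u \<in> ?A \<and> v \<in> ?A \<and> elem_step d u v"
  have zA: "(\<lambda>_. 0) \<in> ?A" and nn: "\<And>x i. x \<in> ?A \<Longrightarrow> 0 \<le> x i"
    using Amap_canon[OF assms, of M] unfolding canon_def by auto
  have "\<forall>x\<in>?A. nat (x 0) = j \<longrightarrow> ?R\<^sup>*\<^sup>* (\<lambda>_. 0) x" for j
  proof (induction j)
    case 0
    show ?case
    proof (intro ballI impI)
      fix x assume x: "x \<in> ?A" "nat (x 0) = 0"
      then have "x 0 = 0" using nn[OF x(1), of 0] by simp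
      then show "?R\<^sup>*\<^sup>* (\<lambda>_. 0) x" using box_reach[OF assms(1) zA x(1)] nn[OF x(1)] by simp
    qed
  next
    case (Suc j)
    show ?case
    proof (intro ballI impI)
      fix x assume x: "x \<in> ?A" "nat (x 0) = Suc j"
      have x0: "x 0 = int (Suc j)" using x(2) nn[OF x(1), of 0] by simp
      have jk: "Suc j < k" using x by (auto simp: Amap_def)
      define c where "c = pt d (Suc j) (loM M (Suc j))"
      define c' where "c' = pt d j (loM M (Suc j))"
      have cA: "c \<in> ?A" unfolding c_def using jk lo_le_hi by (subst pt_in[OF assms(1)]) auto
      have c'A: "c' \<in> ?A" unfolding c'_def using jk
        by (subst pt_in[OF assms(1)]) (auto simp: loM_Suc hiM_def)
      have "nat (c' 0) = j" by (simp add: c'_def pt_def)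
      then have r1: "?R\<^sup>*\<^sup>* (\<lambda>_. 0) c'" using Suc.IH c'A by blast
       have "c = (\<lambda>i. c' i + unitv 0 i)"
        by (auto simp: c_def c'_def pt_def unitv_def fun_eq_iff)
      then have "elem_step d c' c" using unitv_step[of 0 d c'] assms(1) by simp
      then have r2: "?R\<^sup>*\<^sup>* (\<lambda>_. 0) c" using r1 cA c'A by (simp add: rtranclp.rtrancl_into_rtrancl)
      have r3: "?R\<^sup>*\<^sup>* c x"
      proof (rule box_reach[OF assms(1) cA x(1)])
        show "c 0 = x 0" using x0 by (simp add: c_def pt_def)
        show "\<forall>i. c i \<le> x i"
        proof
          fix i
          show "c i \<le> x i"
          proof (cases "i = 0 \<or> d \<le> i")
            case True then show ?thesis using x0 nn[OF x(1), of i] by (auto simp: c_def pt_def)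
          next
            case False
            then show ?thesis using x x0 by (auto simp: c_def pt_def Amap_def)
          qed
        qed
      qed simp
      show "?R\<^sup>*\<^sup>* (\<lambda>_. 0) x" using r2 r3 by (rule rtranclp_trans)
    qed
  qed
  then show ?thesis unfolding directed_def using zA by blast
qed


lemma Amap_x0: "1 \<le> d \<Longrightarrow> (\<lambda>x. x 0) ` Amap d k M = int ` {..<k}"
proof
  show "(\<lambda>x. x 0) ` Amap d k M \<subseteq> int ` {..<k}"
  proof
    fix a assume "a \<in> (\<lambda>x. x 0) ` Amap d k M"
    then obtain x where "x \<in> Amap d k M" "a = x 0" by blast
    then have "0 \<le> a" "a < int k" by (auto simp: Amap_def)
    then show "a \<in> int ` {..<k}" by (intro image_eqI[of _ _ "nat a"]) auto
  qed
  assume d: "1 \<le> d"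
  show "int ` {..<k} \<subseteq> (\<lambda>x. x 0) ` Amap d k M"
  proof
    fix a assume "a \<in> int ` {..<k}"
    then obtain j where j: "j < k" "a = int j" by auto
    have "pt d j (loM M j) \<in> Amap d k M" using j lo_le_hi by (subst pt_in[OF d]) auto
    moreover have "pt d j (loM M j) 0 = a" using j by (simp add: pt_def)
    ultimately show "a \<in> (\<lambda>x. x 0) ` Amap d k M" by force
  qed
qed

lemma Amap_width: "1 \<le> d \<Longrightarrow> width (Amap d k M) = k"
  unfolding width_def by (simp add: Amap_x0 card_image)

lemma Amap_dp:
  assumes "1 \<le> d" "1 \<le> k"
  shows "directed_plateau d (Amap d k M)"
proof -
  have dir: "directed d (Amap d k M)" using Amap_directed[OF assms] .
  have "(\<lambda>_. 0) \<in> Amap d k M" using Amap_canon[OF assms, of M] unfolding canon_def by auto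
  moreover have "Amap d k M \<subseteq> cells d" unfolding Amap_def by blast
  ultimately have poly: "polyhypercube d (Amap d k M)"
    unfolding polyhypercube_def using Amap_finite directed_conn[OF dir] by blast
  have "plateau d a (stratum (Amap d k M) a)" if "a \<in> (\<lambda>x. x 0) ` Amap d k M" for a
  proof -
    have "a \<in> int ` {..<k}" using that Amap_x0[OF assms(1), of k M] by simp
    then obtain j where j: "j < k" "a = int j" by auto
    have "stratum (Amap d k M) a = box d a (loM M j) (hiM M j)"
      using j by (auto simp: stratum_def Amap_def box_def)
    then show ?thesis by (auto simp: plateau_box)
  qed
  then show ?thesis unfolding directed_plateau_def using poly dir by blast
qed

lemma Amap_proj:
  assumes "1 \<le> d" "l \<in> {1..<d}"
  shows "card ((\<lambda>x. (x 0, x l)) ` Amap d k M) = (\<Sum>j<k. count M (j, l, True) + count M (j, l, False) + 1)"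
proof -
  have eq: "(\<lambda>x. (x 0, x l)) ` Amap d k M = Sigma (int ` {..<k}) (\<lambda>a. {loM M (nat a) l..hiM M (nat a) l})"
  proof
    show "(\<lambda>x. (x 0, x l)) ` Amap d k M \<subseteq> Sigma (int ` {..<k}) (\<lambda>a. {loM M (nat a) l..hiM M (nat a) l})"
    proof
      fix p assume "p \<in> (\<lambda>x. (x 0, x l)) ` Amap d k M"
      then obtain x where x: "x \<in> Amap d k M" "p = (x 0, x l)" by blast
      have "x 0 \<in> int ` {..<k}" using x(1) Amap_x0[OF assms(1), of k M] by blast
      then show "p \<in> Sigma (int ` {..<k}) (\<lambda>a. {loM M (nat a) l..hiM M (nat a) l})"
        using x assms(2) by (auto simp: Amap_def)
    qed
    show "Sigma (int ` {..<k}) (\<lambda>a. {loM M (nat a) l..hiM M (nat a) l}) \<subseteq> (\<lambda>x. (x 0, x l)) ` Amap d k M"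
    proof
      fix p assume "p \<in> Sigma (int ` {..<k}) (\<lambda>a. {loM M (nat a) l..hiM M (nat a) l})"
      then obtain j b where jb: "j < k" "p = (int j, b)" "loM M j l \<le> b" "b \<le> hiM M j l" by auto
      let ?y = "pt d j ((loM M j)(l := b))"
      have "?y \<in> Amap d k M" using jb lo_le_hi by (subst pt_in[OF assms(1)]) auto
      moreover have "(?y 0, ?y l) = p" using jb assms(2) by (auto simp: pt_def)
      ultimately show "p \<in> (\<lambda>x. (x 0, x l)) ` Amap d k M" by force
    qed
  qed
  have "card (Sigma (int ` {..<k}) (\<lambda>a. {loM M (nat a) l..hiM M (nat a) l}))
        = (\<Sum>a\<in>int ` {..<k}. card {loM M (nat a) l..hiM M (nat a) l})"
    by (rule card_SigmaI) auto
  also have "\<dots> = (\<Sum>j<k. card {loM M j l..hiM M j l})"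
    by (subst sum.reindex) auto
  also have "\<dots> = (\<Sum>j<k. count M (j, l, True) + count M (j, l, False) + 1)"
    by (intro sum.cong) (auto simp: hiM_def)
  finally show ?thesis using eq by simp
qed

lemma size_count_sum:
  assumes "finite T" "set_mset M \<subseteq> T"
  shows "size M = (\<Sum>x\<in>T. count M x)"
proof -
  have "size M = (\<Sum>x\<in>set_mset M. count M x)" by (simp add: size_multiset_overloaded_eq)
  also have "\<dots> = (\<Sum>x\<in>T. count M x)"
    using assms by (intro sum.mono_neutral_left) (auto simp: not_in_iff)
  finally show ?thesis .
qed

lemma Iset_sub: "Iset d k \<subseteq> {0..<k} \<times> {1..<d} \<times> UNIV"
  by (auto simp: Iset_def)

lemma size_Iset:
  assumes "set_mset M \<subseteq> Iset d k"
  shows "size M = (\<Sum>l\<in>{1..<d}. \<Sum>j<k. count M (j, l, True) + count M (j, l, False))"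
proof -
  have "size M = (\<Sum>x\<in>{0..<k} \<times> {1..<d} \<times> (UNIV::bool set). count M x)"
    using assms Iset_sub by (intro size_count_sum) auto
  also have "\<dots> = (\<Sum>j\<in>{0..<k}. \<Sum>lb\<in>{1..<d} \<times> (UNIV::bool set). count M (j, lb))"
    by (simp add: sum.cartesian_product case_prod_unfold)
  also have "\<dots> = (\<Sum>j\<in>{0..<k}. \<Sum>l\<in>{1..<d}. \<Sum>b\<in>(UNIV::bool set). count M (j, l, b))"
    by (intro sum.cong refl) (simp add: sum.cartesian_product case_prod_unfold)
  also have "\<dots> = (\<Sum>j\<in>{0..<k}. \<Sum>l\<in>{1..<d}. count M (j, l, True) + count M (j, l, False))"
    by (intro sum.cong refl) (simp add: UNIV_bool add.commute)
  also have "\<dots> = (\<Sum>l\<in>{1..<d}. \<Sum>j<k. count M (j, l, True) + count M (j, l, False))"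
    by (subst sum.swap) (simp add: atLeast0LessThan)
  finally show ?thesis .
qed

lemma Amap_lateral:
  assumes "1 \<le> d" "set_mset M \<subseteq> Iset d k"
  shows "lateral_area d (Amap d k M) = k * (d - 1) + size M"
proof -
  have "lateral_area d (Amap d k M) = (\<Sum>l\<in>{1..<d}. \<Sum>j<k. count M (j, l, True) + count M (j, l, False) + 1)"
    unfolding lateral_area_def using Amap_proj[OF assms(1)] by (intro sum.cong) auto
  also have "\<dots> = (\<Sum>l\<in>{1..<d}. (\<Sum>j<k. count M (j, l, True) + count M (j, l, False)) + k)"
    by (intro sum.cong refl) (simp only: sum.distrib, simp)
  also have "\<dots> = size M + (\<Sum>l\<in>{1..<d}. k)"
    by (simp only: sum.distrib size_Iset[OF assms(2)])
  also have "\<dots> = size M + k * (d - 1)" by simp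
  finally show ?thesis by simp
qed


lemma Amap_le:
  assumes "1 \<le> d" "Amap d k M = Amap d k M'" "j < k" "l \<in> {1..<d}"
  shows "loM M' j l \<le> loM M j l \<and> hiM M j l \<le> hiM M' j l"
proof -
  have "pt d j (loM M j) \<in> Amap d k M" using assms(3) lo_le_hi by (subst pt_in[OF assms(1)]) auto
  then have "pt d j (loM M j) \<in> Amap d k M'" using assms(2) by simp
  then have 1: "loM M' j l \<le> loM M j l" using assms(4) by (subst (asm) pt_in[OF assms(1)]) auto
  have "pt d j (hiM M j) \<in> Amap d k M" using assms(3) lo_le_hi by (subst pt_in[OF assms(1)]) auto
  then have "pt d j (hiM M j) \<in> Amap d k M'" using assms(2) by simp
  then have 2: "hiM M j l \<le> hiM M' j l" using assms(4) by (subst (asm) pt_in[OF assms(1)]) auto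
  show ?thesis using 1 2 by simp
qed

lemma Amap_inj:
  assumes "1 \<le> d" "set_mset M \<subseteq> Iset d k" "set_mset M' \<subseteq> Iset d k" "Amap d k M = Amap d k M'"
  shows "M = M'"
proof (rule multiset_eqI)
  fix x :: "nat \<times> nat \<times> bool"
  have lo: "loM M j l = loM M' j l" and hi: "hiM M j l = hiM M' j l" if "j < k" "l \<in> {1..<d}" for j l
    using Amap_le[OF assms(1) assms(4) that] Amap_le[OF assms(1) assms(4)[symmetric] that] by auto
  obtain j l b where x: "x = (j, l, b)" by (cases x) auto
  show "count M x = count M' x"
  proof (cases "x \<in> Iset d k")
    case False
    then show ?thesis using assms(2,3) by (metis count_eq_zero_iff subsetD)
  next
    case True
    then have jl: "j < k" "l \<in> {1..<d}" using x by (auto simp: Iset_def)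
    show ?thesis
    proof (cases b)
      case True
      then have "Suc j < k" using \<open>x \<in> Iset d k\<close> x by (auto simp: Iset_def)
      then have "loM M (Suc j) l = loM M' (Suc j) l" using lo jl by simp
      then show ?thesis using lo[OF jl] x True by (simp add: loM_Suc)
    next
      case False
      have c: "count M (j, l, True) = count M' (j, l, True)"
      proof (cases "Suc j < k")
        case True
        then have "loM M (Suc j) l = loM M' (Suc j) l" using lo jl by simp
        then show ?thesis using lo[OF jl] by (simp add: loM_Suc)
      next
        case False
        then have "(j, l, True) \<notin> Iset d k" by (auto simp: Iset_def)
        then show ?thesis using assms(2,3) by (metis count_eq_zero_iff subsetD)
      qed
      show ?thesis using hi[OF jl] lo[OF jl] c x False by (simp add: hiM_def)
    qed
  qed
qed

lemma finite_Iset: "finite (Iset d k)"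
  using Iset_sub finite_subset by (metis finite_SigmaI finite_UNIV finite_atLeastLessThan)

lemma Amap_surj:
  assumes d: "1 \<le> d" and k: "1 \<le> k" and dp: "directed_plateau d A" and cA: "canon A"
    and wA: "width A = k"
  shows "\<exists>M. set_mset M \<subseteq> Iset d k \<and> A = Amap d k M"
proof -
  let ?R = "\<lambda>u v. u \<in> A \<and> v \<in> A \<and> elem_step d u v"
  let ?X0 = "(\<lambda>x. x 0) ` A"
  have polyA: "polyhypercube d A" and dirA: "directed d A"
    and plA: "\<forall>a\<in>?X0. plateau d a (stratum A a)"
    using dp unfolding directed_plateau_def by auto
  have finA: "finite A" and cellsA: "A \<subseteq> cells d" using polyA unfolding polyhypercube_def by auto
  have zA: "(\<lambda>_. 0) \<in> A" and nn: "\<And>x i. x \<in> A \<Longrightarrow> 0 \<le> x i" using cA unfolding canon_def by auto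
  obtain r where r: "r \<in> A" "\<forall>c\<in>A. ?R\<^sup>*\<^sup>* r c" "\<forall>c\<in>A. \<forall>i. r i \<le> c i"
    using directed_root[OF dirA] by blast
  have "r = (\<lambda>_. 0)"
  proof
    fix i show "r i = 0" using r(3) zA nn[OF r(1), of i] by (metis order_antisym)
  qed
  then have reach: "\<And>c. c \<in> A \<Longrightarrow> ?R\<^sup>*\<^sup>* (\<lambda>_. 0) c" using r(2) by blast
  have down: "b \<in> ?X0" if "x \<in> A" "0 \<le> b" "b \<le> x 0" for x b
  proof -
    have "?R\<^sup>*\<^sup>* (\<lambda>_. 0) x" using reach that(1) .
    then show ?thesis using that(2,3)
    proof (induction arbitrary: b rule: rtranclp_induct)
      case base
      then have "b = 0" by simp
      then show ?case using zA by force
    next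
      case (step y z)
      obtain i where i: "i < d" "z = (\<lambda>t. y t + unitv i t)" using step.hyps(2) unfolding elem_step_def by blast
      have "z 0 \<le> y 0 + 1" using i by (simp add: unitv_def)
      show ?case
      proof (cases "b \<le> y 0")
        case True then show ?thesis using step.IH step.prems by blast
      next
        case False
        then have "b = z 0" using \<open>z 0 \<le> y 0 + 1\<close> step.prems by linarith
        then show ?thesis using step.hyps(2) by blast
      qed
    qed
  qed
  have X0: "?X0 = int ` {..<k}"
  proof -
    have fin: "finite ?X0" using finA by simp
    have ne: "?X0 \<noteq> {}" using zA by blast
    define m where "m = Max ?X0"
    have mX: "m \<in> ?X0" unfolding m_def using fin ne by (rule Max_in)
    have eq: "?X0 = {0..<m+1}"
    proof
      show "?X0 \<subseteq> {0..<m+1}" using nn Max_ge[OF fin] unfolding m_def by fastforce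
      show "{0..<m+1} \<subseteq> ?X0"
      proof
        fix b assume "b \<in> {0..<m+1}"
        moreover obtain x where "x \<in> A" "m = x 0" using mX by blast
        ultimately show "b \<in> ?X0" using down by auto
      qed
    qed
    have "0 \<le> m" using mX nn by auto
    have "card ?X0 = nat (m + 1)" using eq by simp
    then have "m + 1 = int k" using wA \<open>0 \<le> m\<close> unfolding width_def by simp
    then show ?thesis using eq image_atLeastZeroLessThan_int[of "int k"] by simp
  qed
  have X0i: "int j \<in> ?X0" if "j < k" for j using X0 that by blast
  have "\<forall>j. \<exists>p. j < k \<longrightarrow> stratum A (int j) = box d (int j) (fst p) (snd p)"
  proof
    fix j
    show "\<exists>p. j < k \<longrightarrow> stratum A (int j) = box d (int j) (fst p) (snd p)"
    proof (cases "j < k")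
      case True
      then obtain lo hi where "stratum A (int j) = box d (int j) lo hi"
        using plA X0i[OF True] by (auto simp: plateau_box)
      then show ?thesis by (metis fst_conv snd_conv)
    qed simp
  qed
  then obtain F where F: "\<forall>j. j < k \<longrightarrow> stratum A (int j) = box d (int j) (fst (F j)) (snd (F j))"
    by (metis choice)
  define LO where "LO j = fst (F j)" for j
  define HI where "HI j = snd (F j)" for j
  have strat: "stratum A (int j) = box d (int j) (LO j) (HI j)" if "j < k" for j
    using F that unfolding LO_def HI_def by blast
  have memA: "x \<in> A \<longleftrightarrow> x \<in> cells d \<and> 0 \<le> x 0 \<and> x 0 < int k \<and>
      (\<forall>l\<in>{1..<d}. LO (nat (x 0)) l \<le> x l \<and> x l \<le> HI (nat (x 0)) l)" for x
  proof
    assume x: "x \<in> A"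
    then have "x 0 \<in> int ` {..<k}" using X0 by blast
    then obtain j where j: "j < k" "x 0 = int j" by auto
    have "x \<in> stratum A (int j)" using x j by (simp add: stratum_def)
    then show "x \<in> cells d \<and> 0 \<le> x 0 \<and> x 0 < int k \<and>
      (\<forall>l\<in>{1..<d}. LO (nat (x 0)) l \<le> x l \<and> x l \<le> HI (nat (x 0)) l)"
      using strat[OF j(1)] j by (simp add: box_def)
  next
    assume x: "x \<in> cells d \<and> 0 \<le> x 0 \<and> x 0 < int k \<and>
      (\<forall>l\<in>{1..<d}. LO (nat (x 0)) l \<le> x l \<and> x l \<le> HI (nat (x 0)) l)"
    define j where "j = nat (x 0)"
    have j: "j < k" "x 0 = int j" using x unfolding j_def by auto
    have "x \<in> box d (int j) (LO j) (HI j)" using x j unfolding box_def j_def by auto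
    then show "x \<in> A" using strat[OF j(1)] unfolding stratum_def by blast
  qed
  have lohi: "LO j l \<le> HI j l" if hj: "j < k" "l \<in> {1..<d}" for j l
  proof -
    obtain x where "x \<in> A" "x 0 = int j" using X0i[OF hj(1)] by auto
    then show ?thesis using memA[of x] hj by force
  qed
  have ptA: "pt d j f \<in> A" if "j < k" "\<forall>l\<in>{1..<d}. LO j l \<le> f l \<and> f l \<le> HI j l" for j f
    using that pt_cells[OF d] by (subst memA) (auto simp: pt_def)
  have LO0: "LO 0 l = 0" if "l \<in> {1..<d}" for l
  proof -
    have "LO 0 l \<le> 0" using memA[of "\<lambda>_. 0"] zA that by auto
    moreover have "pt d 0 (LO 0) \<in> A" using k lohi by (intro ptA) auto
    then have "0 \<le> pt d 0 (LO 0) l" using nn by blast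
    then have "0 \<le> LO 0 l" using that by (simp add: pt_def)
    ultimately show ?thesis by simp
  qed
  have LOstep: "LO j l \<le> LO (Suc j) l \<and> LO (Suc j) l \<le> HI j l" if "Suc j < k" "l \<in> {1..<d}" for j l
  proof -
    define c where "c = pt d (Suc j) (LO (Suc j))"
    have cA: "c \<in> A" unfolding c_def using that lohi by (intro ptA) auto
    have "?R\<^sup>*\<^sup>* (\<lambda>_. 0) c" using reach cA .
    then obtain p where p: "?R p c"
    proof (cases rule: rtranclp.cases)
      case rtrancl_refl
      then have "c 0 = 0" by simp
      then show ?thesis by (simp add: c_def pt_def)
    next
      case (rtrancl_into_rtrancl p)
      then show ?thesis using that by blast
    qed
    obtain i where i: "i < d" "c = (\<lambda>t. p t + unitv i t)" using p unfolding elem_step_def by blast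
    have pA: "p \<in> A" using p by blast
    have pc: "p t = c t - unitv i t" for t using i(2) by (simp add: fun_eq_iff)
    show ?thesis
    proof (cases "i = 0")
      case True
      have "p = pt d j (LO (Suc j))"
        using True by (auto simp: fun_eq_iff pc c_def pt_def unitv_def)
      then show ?thesis using pA memA[of p] that by (simp add: pt_def)
    next
      case False
      have p0: "p 0 = int (Suc j)" using False by (simp add: pc c_def pt_def unitv_def)
      have "p i = LO (Suc j) i - 1" using i(1) False by (simp add: pc c_def pt_def unitv_def)
      moreover have "LO (Suc j) i \<le> p i"
      proof -
        have n0: "nat (p 0) = Suc j" using p0 by simp
        have iI: "i \<in> {1..<d}" using i(1) False by simp
        have "\<forall>l\<in>{1..<d}. LO (nat (p 0)) l \<le> p l" using pA memA[of p] by blast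
        then show ?thesis using n0 iI by fastforce
      qed
      ultimately show ?thesis by simp
    qed
  qed
  define cnt where "cnt = (\<lambda>(j, l, b). if (j, l, b) \<in> Iset d k then
      (if b then nat (LO (Suc j) l - LO j l)
       else if Suc j < k then nat (HI j l - LO (Suc j) l) else nat (HI j l - LO j l)) else 0)"
  have "{x. 0 < cnt x} \<subseteq> Iset d k" unfolding cnt_def by (auto split: if_splits)
  then have fin: "finite {x. 0 < cnt x}" using finite_Iset finite_subset by blast
  define M where "M = Abs_multiset cnt"
  have cM: "count M = cnt" unfolding M_def using fin by (rule count_Abs_multiset)
  have setM: "set_mset M \<subseteq> Iset d k"
  proof
    fix x assume "x \<in># M"
    then have "0 < cnt x" using cM by (metis count_greater_zero_iff)
    then show "x \<in> Iset d k" unfolding cnt_def by (auto split: prod.splits if_splits)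
  qed
  have loEq: "loM M j l = LO j l" if "j < k" "l \<in> {1..<d}" for j l
    using that(1)
  proof (induction j)
    case 0 then show ?case using LO0 that(2) by simp
  next
    case (Suc j)
    have "(j, l, True) \<in> Iset d k" using Suc.prems that(2) by (auto simp: Iset_def)
    then have "count M (j, l, True) = nat (LO (Suc j) l - LO j l)" using cM by (simp add: cnt_def)
    then show ?case using Suc LOstep[OF Suc.prems that(2)] by (simp add: loM_Suc)
  qed
  have hiEq: "hiM M j l = HI j l" if "j < k" "l \<in> {1..<d}" for j l
  proof (cases "Suc j < k")
    case True
    have "(j, l, True) \<in> Iset d k" "(j, l, False) \<in> Iset d k" using True that(2) by (auto simp: Iset_def)
    then have "count M (j, l, True) = nat (LO (Suc j) l - LO j l)"
      "count M (j, l, False) = nat (HI j l - LO (Suc j) l)" using cM True by (auto simp: cnt_def)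
    then show ?thesis using loEq[OF that] LOstep[OF True that(2)] by (simp add: hiM_def)
  next
    case False
    have "(j, l, True) \<notin> Iset d k" "(j, l, False) \<in> Iset d k" using False that by (auto simp: Iset_def)
    then have "count M (j, l, True) = 0"
      "count M (j, l, False) = nat (HI j l - LO j l)" using cM False by (auto simp: cnt_def)
    then show ?thesis using loEq[OF that] lohi[OF that] by (simp add: hiM_def)
  qed
  have "A = Amap d k M"
  proof (rule set_eqI)
    fix x
    show "x \<in> A \<longleftrightarrow> x \<in> Amap d k M"
    proof (cases "0 \<le> x 0 \<and> x 0 < int k")
      case True
      then have "nat (x 0) < k" by (simp add: nat_less_iff)
      then show ?thesis using memA[of x] loEq hiEq True by (auto simp: Amap_def)
    next
      case False
      then show ?thesis using memA[of x] by (auto simp: Amap_def)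
    qed
  qed
  then show ?thesis using setM by blast
qed


lemma card_Iset:
  assumes "1 \<le> k"
  shows "card (Iset d k) = 2 * k * (d - 1) - (d - 1)"
proof -
  have sub: "{k-1} \<times> {1..<d} \<times> {True} \<subseteq> {0..<k} \<times> {1..<d} \<times> (UNIV :: bool set)"
  proof -
    have "k - 1 < k" using assms by simp
    then show ?thesis by auto
  qed
  have "card (Iset d k) = card ({0..<k} \<times> {1..<d} \<times> (UNIV :: bool set)) - card ({k-1} \<times> {1..<d} \<times> {True})"
    unfolding Iset_def by (rule card_Diff_subset[OF _ sub]) auto
  also have "card ({0..<k} \<times> {1..<d} \<times> (UNIV :: bool set)) = k * ((d - 1) * 2)"
    by (simp add: card_cartesian_product card_UNIV_bool)
  also have "card ({k-1} \<times> {1..<d} \<times> {True}) = d - 1"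
    by (simp add: card_cartesian_product)
  finally show ?thesis by (simp add: algebra_simps)
qed

lemma count_classes:
  assumes d: "1 \<le> d" and k: "1 \<le> k"
  shows "p_count d k n = (if k * (d - 1) \<le> n then (card (Iset d k) + (n - k * (d - 1)) - 1) choose (n - k * (d - 1)) else 0)"
proof -
  define S where "S = {A. directed_plateau d A \<and> width A = k \<and> lateral_area d A = n}"
  have "p_count d k n = card (S // transl_rel d)" unfolding p_count_def S_def ..
  also have "\<dots> = card {A\<in>S. canon A}"
  proof (rule quotient_card)
    fix A v assume "A \<in> S" "v \<in> cells d"
    then show "tr v ` A \<in> S" unfolding S_def
      using directed_plateau_tr width_tr lateral_tr by auto
  next
    fix A assume "A \<in> S"
    then show "directed d A \<and> A \<subseteq> cells d"
      unfolding S_def directed_plateau_def polyhypercube_def by auto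
  qed
  also have "{A\<in>S. canon A} = Amap d k ` {M. set_mset M \<subseteq> Iset d k \<and> k * (d - 1) + size M = n}"
  proof
    show "{A\<in>S. canon A} \<subseteq> Amap d k ` {M. set_mset M \<subseteq> Iset d k \<and> k * (d - 1) + size M = n}"
    proof
      fix A assume A: "A \<in> {A\<in>S. canon A}"
      then obtain M where M: "set_mset M \<subseteq> Iset d k" "A = Amap d k M"
        using Amap_surj[OF d k] unfolding S_def by blast
      then have "k * (d - 1) + size M = n" using A Amap_lateral[OF d M(1)] unfolding S_def by simp
      then show "A \<in> Amap d k ` {M. set_mset M \<subseteq> Iset d k \<and> k * (d - 1) + size M = n}"
        using M by blast
    qed
    show "Amap d k ` {M. set_mset M \<subseteq> Iset d k \<and> k * (d - 1) + size M = n} \<subseteq> {A\<in>S. canon A}"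
      unfolding S_def using Amap_dp[OF d k] Amap_width[OF d] Amap_lateral[OF d] Amap_canon[OF d k]
      by auto
  qed
  also have "card (Amap d k ` {M. set_mset M \<subseteq> Iset d k \<and> k * (d - 1) + size M = n})
      = card {M. set_mset M \<subseteq> Iset d k \<and> k * (d - 1) + size M = n}"
    by (rule card_image, rule inj_onI, rule Amap_inj[OF d]) auto
  also have "{M. set_mset M \<subseteq> Iset d k \<and> k * (d - 1) + size M = n}
      = (if k * (d - 1) \<le> n then multisets_of_size (Iset d k) (n - k * (d - 1)) else {})"
    by (auto simp: multisets_of_size_def)
  also have "card \<dots> = (if k * (d - 1) \<le> n then (card (Iset d k) + (n - k * (d - 1)) - 1) choose (n - k * (d - 1)) else 0)"
    by (simp add: card_multisets_of_size finite_Iset)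
  finally show ?thesis .
qed

theorem proposition1:
  fixes d k :: nat
  assumes "d \<ge> 3" and "k \<ge> 1"
  shows "P_gf d k = fps_X ^ (k * (d - 1)) / (1 - fps_X) ^ (2 * k * (d - 1) - (d - 1))"
proof -
  define a where "a = k * (d - 1)"
  define m where "m = 2 * k * (d - 1) - (d - 1)"
  have d1: "1 \<le> d" using assms by simp
  have apos: "0 < a" unfolding a_def using assms by simp
  have mpos: "0 < m"
  proof -
    have "2 * 1 * (d - 1) \<le> 2 * k * (d - 1)" using assms(2) by (intro mult_le_mono) auto
    then show ?thesis unfolding m_def using assms(1) by linarith
  qed
  have cI: "card (Iset d k) = m" unfolding m_def using card_Iset assms(2) .
  have z: "((1 - fps_X) ^ m :: rat fps) $ 0 \<noteq> 0" by simp
  have inv: "inverse ((1 - fps_X) ^ m :: rat fps) = Abs_fps (\<lambda>j. of_nat ((m + j - 1) choose j))"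
    using one_minus_const_fps_X_neg_power'[OF mpos, of "1::rat"] by simp
  have rhs: "(fps_X ^ a / (1 - fps_X) ^ m :: rat fps) = fps_X ^ a * Abs_fps (\<lambda>j. of_nat ((m + j - 1) choose j))"
    using fps_divide_unit[OF z] inv by simp
  show ?thesis
    unfolding a_def[symmetric] m_def[symmetric]
  proof (rule fps_ext)
    fix n
    show "P_gf d k $ n = (fps_X ^ a / (1 - fps_X) ^ m :: rat fps) $ n"
    proof (cases "n = 0")
      case True
      then show ?thesis using apos rhs by (simp add: P_gf_def fps_X_power_mult_nth)
    next
      case False
      then show ?thesis using rhs count_classes[OF d1 assms(2), of n] cI
        by (simp add: P_gf_def fps_X_power_mult_nth a_def not_less)
    qed
  qed
qed

end
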